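(* Let $c>0$ and let $\{\alpha_t\}_{t\ge1}$ be a sequence of nonnegative reals with $c\alpha_t/4\le1$ for all $t$. Consider the sequences defined by $$\theta_{t+1}=\theta_t+\alpha_t\frac{1}{1+\exp(c\theta_t)},\qquad \theta'_{t+1}=\theta'_t+\alpha_t\frac{1}{1+\exp(c\theta'_t)}.$$ If $\theta_1-\theta'_1\ge0$, then for every $t\ge1$, $$\theta_t-\theta'_t\ge(\theta_1-\theta'_1)\prod_{i=1}^{t-1}\Big(1-\frac{c\alpha_i}{4}\Big).$$ *)

theory Defs
  imports Complex_Main
begin

end

theory Submission
  imports Defs
begin

lemma sig_lip:
  fixes c x y :: real
  assumes c: "c > 0" and xy: "y \<le> x"
  shows "1 / (1 + exp (c * x)) - 1 / (1 + exp (c * y)) \<ge> - (c / 4) * (x - y)"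
proof -
  let ?g = "\<lambda>z::real. 1 / (1 + exp (c * z)) + z * (c / 4)"
  have "?g y \<le> ?g x"
  proof (rule DERIV_nonneg_imp_nondecreasing[OF xy])
    fix z :: real assume "y \<le> z" "z \<le> x"
    define e where "e = exp (c * z)"
    have e0: "e > 0" unfolding e_def by simp
    have D: "(?g has_real_derivative (- (c * e) / (1 + e)^2 + c / 4)) (at z)"
    proof -
      have ne: "1 + exp (c * z) \<noteq> 0" by (smt (verit) exp_gt_zero)
      show ?thesis unfolding e_def using ne
        by (auto intro!: derivative_eq_intros simp: field_simps power2_eq_square)
    qed
    have sq: "(1 + e)^2 - 4 * e = (e - 1)^2" by (simp add: power2_eq_square algebra_simps)
    have "(e - 1)^2 \<ge> 0" by simp
    hence h4: "4 * e \<le> (1 + e)^2" using sq by linarith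
    have pos: "(1 + e)^2 > 0" using e0 by simp
    have "c * (4 * e) \<le> c * (1 + e)^2" using mult_left_mono[OF h4] c by simp
    hence "(c * e) / (1 + e)^2 \<le> c / 4" using pos by (simp add: divide_le_eq)
    thus "\<exists>y. (?g has_real_derivative y) (at z) \<and> 0 \<le> y" using D by (intro exI[of _ "- (c * e) / (1 + e)^2 + c / 4"]) auto
  qed
  thus ?thesis by (simp add: field_simps)
qed

theorem lemmaA3:
  fixes c :: real and \<alpha> \<theta> \<theta>' :: "nat \<Rightarrow> real"
  assumes c_pos: "c > 0"
    and \<alpha>_nonneg: "\<And>t. t \<ge> 1 \<Longrightarrow> \<alpha> t \<ge> 0"
    and \<alpha>_bound: "\<And>t. t \<ge> 1 \<Longrightarrow> c * \<alpha> t / 4 \<le> 1"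
    and \<theta>_rec: "\<And>t. t \<ge> 1 \<Longrightarrow> \<theta> (t + 1) = \<theta> t + \<alpha> t * (1 / (1 + exp (c * \<theta> t)))"
    and \<theta>'_rec: "\<And>t. t \<ge> 1 \<Longrightarrow> \<theta>' (t + 1) = \<theta>' t + \<alpha> t * (1 / (1 + exp (c * \<theta>' t)))"
    and init: "\<theta> 1 - \<theta>' 1 \<ge> 0"
  shows "\<forall>t\<ge>1. \<theta> t - \<theta>' t \<ge> (\<theta> 1 - \<theta>' 1) * (\<Prod>i=1..t-1. (1 - c * \<alpha> i / 4))"
proof -
  define P where "P t = (\<Prod>i=1..t-1. (1 - c * \<alpha> i / 4))" for t
  have main: "\<theta> t - \<theta>' t \<ge> (\<theta> 1 - \<theta>' 1) * P t \<and> P t \<ge> 0" if "t \<ge> 1" for t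
    using that
  proof (induction t rule: nat_induct_at_least)
    case base
    then show ?case by (simp add: P_def)
  next
    case (Suc n)
    let ?d = "\<theta> n - \<theta>' n"
    let ?q = "1 - c * \<alpha> n / 4"
    have q0: "?q \<ge> 0" using \<alpha>_bound[OF Suc.hyps] by simp
    have PS: "P (Suc n) = P n * ?q"
    proof -
      have "{1..Suc n - 1} = insert n {1..n-1}" using Suc.hyps by auto
      thus ?thesis unfolding P_def using Suc.hyps by (simp add: mult.commute)
    qed
    have d0: "?d \<ge> 0" using Suc.IH init by (meson mult_nonneg_nonneg order_trans)
    have L: "1 / (1 + exp (c * \<theta> n)) - 1 / (1 + exp (c * \<theta>' n)) \<ge> - (c / 4) * ?d"
      using sig_lip[OF c_pos, of "\<theta>' n" "\<theta> n"] d0 by simp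
    have "\<theta> (Suc n) - \<theta>' (Suc n) = ?d + \<alpha> n * (1 / (1 + exp (c * \<theta> n)) - 1 / (1 + exp (c * \<theta>' n)))"
      using \<theta>_rec[OF Suc.hyps] \<theta>'_rec[OF Suc.hyps] by (simp add: algebra_simps)
    also have "\<dots> \<ge> ?d + \<alpha> n * (- (c / 4) * ?d)"
      using mult_left_mono[OF L \<alpha>_nonneg[OF Suc.hyps]] by simp
    finally have A: "\<theta> (Suc n) - \<theta>' (Suc n) \<ge> ?q * ?d" by (simp add: algebra_simps)
    have "?q * ?d \<ge> ?q * ((\<theta> 1 - \<theta>' 1) * P n)" using mult_left_mono[OF conjunct1[OF Suc.IH] q0] .
    with A PS Suc.IH q0 show ?case by (simp add: mult_ac)
  qed
  show ?thesis using main unfolding P_def by blast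
qed

end
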